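(* Let $\Phi(u)=\mathbb{P}(\tau=\infty\mid X_0=u)$ be the survival probability of the capital process $X$ described in the context. Then $\lim_{u\to 0+}\Phi(u)=0$; in particular, setting $\Phi(0)=0$ yields a function that is right-continuous at $0$.
   Context: On a filtered probability space satisfying the usual conditions, let $W$ be a standard Brownian motion and $P_t=\sum_{i=1}^{N_t}\xi_i$ an independent compound Poisson process, where $N$ is a Poisson process with intensity $\lambda>0$ and $(\xi_i)_{i\ge1}$ are i.i.d. strictly positive random variables (independent of $N$) with distribution function $F$ (so $F(0)=0$) and finite first moment. Let $c>0$, $a\in\mathbb{R}$, $\sigma>0$. The capital process $X$ solves $dX_t=(aX_t-c)\,dt+\sigma X_t\,dW_t+dP_t$, $X_0=u\ge 0$. The ruin time is $\tau=\inf\{t\ge0: X_t\le 0\}$ (with $\inf\varnothing=\infty$), and the survival probability is $\Phi(u)=\mathbb{P}(\tau=\infty\mid X_0=u)$, extended by $\Phi(x)=0$ for $x<0$. *)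

theory Defs
  imports "HOL-Probability.Probability"
begin

definition std_brownian_motion :: "'w measure \<Rightarrow> (real \<Rightarrow> 'w \<Rightarrow> real) \<Rightarrow> bool" where
  "std_brownian_motion M W \<longleftrightarrow>
     (\<forall>t. W t \<in> borel_measurable M) \<and>
     (\<forall>\<omega>\<in>space M. W 0 \<omega> = 0 \<and> continuous_on {0..} (\<lambda>t. W t \<omega>)) \<and>
     (\<forall>s t. 0 \<le> s \<and> s < t \<longrightarrow>
        distributed M lborel (\<lambda>\<omega>. W t \<omega> - W s \<omega>) (normal_density 0 (sqrt (t - s)))) \<and>
     (\<forall>(n::nat) (ts::nat \<Rightarrow> real). 0 \<le> ts 0 \<and> (\<forall>i<n. ts i < ts (Suc i)) \<longrightarrow>
        prob_space.indep_vars M (\<lambda>_. borel) (\<lambda>i \<omega>. W (ts (Suc i)) \<omega> - W (ts i) \<omega>) {..<n})"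

text \<open>Jump times of the Poisson process built from interarrival times E:
  the (k+1)-th jump happens at E 0 + ... + E k.\<close>
definition jump_time :: "(nat \<Rightarrow> 'w \<Rightarrow> real) \<Rightarrow> nat \<Rightarrow> 'w \<Rightarrow> real" where
  "jump_time E k \<omega> = (\<Sum>i\<le>k. E i \<omega>)"

definition poisson_count :: "(nat \<Rightarrow> 'w \<Rightarrow> real) \<Rightarrow> real \<Rightarrow> 'w \<Rightarrow> nat" where
  "poisson_count E t \<omega> = card {k. jump_time E k \<omega> \<le> t}"

definition compound_poisson ::
  "(nat \<Rightarrow> 'w \<Rightarrow> real) \<Rightarrow> (nat \<Rightarrow> 'w \<Rightarrow> real) \<Rightarrow> real \<Rightarrow> 'w \<Rightarrow> real" where
  "compound_poisson E \<xi> t \<omega> = (\<Sum>k\<in>{k. jump_time E k \<omega> \<le> t}. \<xi> k \<omega>)"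

text \<open>Stochastic exponential Y_t = exp((a - sigma^2/2) t + sigma W_t),
  solution of dY = a Y dt + sigma Y dW, Y_0 = 1.\<close>
definition geo_factor :: "real \<Rightarrow> real \<Rightarrow> (real \<Rightarrow> 'w \<Rightarrow> real) \<Rightarrow> real \<Rightarrow> 'w \<Rightarrow> real" where
  "geo_factor a \<sigma> W t \<omega> = exp ((a - \<sigma>\<^sup>2 / 2) * t + \<sigma> * W t \<omega>)"

text \<open>The (pathwise, unique strong) solution of
  dX_t = (a X_t - c) dt + sigma X_t dW_t + dP_t, X_0 = u, obtained by variation of constants:
  X_t = Y_t (u - c \<integral>_0^t Y_s^{-1} ds + \<Sum>_{jumps T_k \<le> t} xi_k / Y_{T_k}).\<close>
definition capital ::
  "real \<Rightarrow> real \<Rightarrow> real \<Rightarrow> (real \<Rightarrow> 'w \<Rightarrow> real) \<Rightarrow> (nat \<Rightarrow> 'w \<Rightarrow> real) \<Rightarrow> (nat \<Rightarrow> 'w \<Rightarrow> real)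
    \<Rightarrow> real \<Rightarrow> real \<Rightarrow> 'w \<Rightarrow> real" where
  "capital a c \<sigma> W E \<xi> u t \<omega> =
     geo_factor a \<sigma> W t \<omega> *
       (u - c * integral {0..t} (\<lambda>s. 1 / geo_factor a \<sigma> W s \<omega>)
          + (\<Sum>k\<in>{k. jump_time E k \<omega> \<le> t}. \<xi> k \<omega> / geo_factor a \<sigma> W (jump_time E k \<omega>) \<omega>))"

text \<open>Survival event {tau = infinity}: the capital never drops to or below 0.\<close>
definition survival_event ::
  "'w measure \<Rightarrow> real \<Rightarrow> real \<Rightarrow> real \<Rightarrow> (real \<Rightarrow> 'w \<Rightarrow> real) \<Rightarrow> (nat \<Rightarrow> 'w \<Rightarrow> real)
    \<Rightarrow> (nat \<Rightarrow> 'w \<Rightarrow> real) \<Rightarrow> real \<Rightarrow> 'w set" where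
  "survival_event M a c \<sigma> W E \<xi> u =
     {\<omega>\<in>space M. \<forall>t\<ge>0. capital a c \<sigma> W E \<xi> u t \<omega> > 0}"

definition survival_prob ::
  "'w measure \<Rightarrow> real \<Rightarrow> real \<Rightarrow> real \<Rightarrow> (real \<Rightarrow> 'w \<Rightarrow> real) \<Rightarrow> (nat \<Rightarrow> 'w \<Rightarrow> real)
    \<Rightarrow> (nat \<Rightarrow> 'w \<Rightarrow> real) \<Rightarrow> real \<Rightarrow> real" where
  "survival_prob M a c \<sigma> W E \<xi> u =
     (if u < 0 then 0 else measure M (survival_event M a c \<sigma> W E \<xi> u))"

end

theory Submission
  imports Defs
begin


lemma dyadic_lim: "(\<lambda>n. real_of_int \<lfloor>t * 2^n\<rfloor> / 2^n) \<longlonglongrightarrow> (t::real)"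
proof (rule tendsto_sandwich[of "\<lambda>n. t - 1/2^n" _ _ "\<lambda>n. t"])
  show "\<forall>\<^sub>F n in sequentially. t - 1 / 2 ^ n \<le> real_of_int \<lfloor>t * 2 ^ n\<rfloor> / 2 ^ n"
  proof (intro always_eventually allI)
    fix n :: nat
    have "t * 2^n - 1 \<le> real_of_int \<lfloor>t * 2 ^ n\<rfloor>" by linarith
    then have "(t * 2^n - 1) / 2^n \<le> real_of_int \<lfloor>t * 2 ^ n\<rfloor> / 2 ^ n"
      by (intro divide_right_mono) simp_all
    moreover have "t - 1 / 2 ^ n = (t * 2^n - 1) / 2^n" by (simp add: field_simps)
    ultimately show "t - 1 / 2 ^ n \<le> real_of_int \<lfloor>t * 2 ^ n\<rfloor> / 2 ^ n" by simp
  qed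
  show "\<forall>\<^sub>F n in sequentially. real_of_int \<lfloor>t * 2 ^ n\<rfloor> / 2 ^ n \<le> t"
  proof (intro always_eventually allI)
    fix n :: nat
    have "real_of_int \<lfloor>t * 2 ^ n\<rfloor> \<le> t * 2^n" by linarith
    then have "real_of_int \<lfloor>t * 2 ^ n\<rfloor> / 2 ^ n \<le> t * 2^n / 2^n"
      by (intro divide_right_mono) simp_all
    then show "real_of_int \<lfloor>t * 2 ^ n\<rfloor> / 2 ^ n \<le> t" by simp
  qed
  have "(\<lambda>n. t - 1 / 2 ^ n) \<longlonglongrightarrow> t - 0"
    by (intro tendsto_intros LIMSEQ_divide_realpow_zero) auto
  then show "(\<lambda>n. t - 1 / 2 ^ n) \<longlonglongrightarrow> t" by simp
qed simp

lemma joint_meas: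
  fixes X :: "real \<Rightarrow> 'w \<Rightarrow> real"
  assumes X: "\<And>t. X t \<in> borel_measurable M"
    and cont: "\<And>\<omega>. \<omega> \<in> space M \<Longrightarrow> continuous_on UNIV (\<lambda>t. X t \<omega>)"
  shows "(\<lambda>p. X (fst p) (snd p)) \<in> borel_measurable (borel \<Otimes>\<^sub>M M)"
proof (rule borel_measurable_LIMSEQ_real[where u="\<lambda>n p. X (real_of_int \<lfloor>fst p * (2::real)^n\<rfloor> / 2^n) (snd p)"])
  fix p :: "real \<times> 'w" assume "p \<in> space (borel \<Otimes>\<^sub>M M)"
  then have "snd p \<in> space M" by (simp add: space_pair_measure mem_Times_iff)
  then have "isCont (\<lambda>t. X t (snd p)) (fst p)"
    using cont continuous_on_eq_continuous_at by blast
  from isCont_tendsto_compose[OF this dyadic_lim]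
  show "(\<lambda>n. X (real_of_int \<lfloor>fst p * (2::real)^n\<rfloor> / 2^n) (snd p)) \<longlonglongrightarrow> X (fst p) (snd p)" .
next
  fix n :: nat
  show "(\<lambda>p. X (real_of_int \<lfloor>fst p * (2::real)^n\<rfloor> / 2^n) (snd p)) \<in> borel_measurable (borel \<Otimes>\<^sub>M M)"
  proof (rule measurable_compose_countable'[where f="\<lambda>k p. X (real_of_int k / 2^n) (snd p)" and I=UNIV and g="\<lambda>p. \<lfloor>fst p * (2::real) ^ n\<rfloor>"])
    fix k :: int
    show "(\<lambda>p. X (real_of_int k / 2^n) (snd p)) \<in> borel_measurable (borel \<Otimes>\<^sub>M M)"
      by (rule measurable_compose[OF measurable_snd X])
  next
    show "(\<lambda>p. \<lfloor>fst p * (2::real) ^ n\<rfloor>) \<in> measurable (borel \<Otimes>\<^sub>M M) (count_space UNIV)"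
      by measurable
  qed simp
qed

lemma integral_joint_meas:
  fixes g :: "real \<times> 'w \<Rightarrow> real"
  assumes g[measurable]: "g \<in> borel_measurable (borel \<Otimes>\<^sub>M M)"
  shows "(\<lambda>p. LINT s:{0..fst p}|lborel. g (s, snd p)) \<in> borel_measurable (borel \<Otimes>\<^sub>M M)"
  unfolding set_lebesgue_integral_def
proof (rule lborel.borel_measurable_lebesgue_integral)
  show "(\<lambda>(p, s). indicator {0..fst p} s *\<^sub>R g (s, snd p)) \<in> borel_measurable ((borel \<Otimes>\<^sub>M M) \<Otimes>\<^sub>M lborel)"
  proof -
    have e: "measurable ((borel \<Otimes>\<^sub>M M) \<Otimes>\<^sub>M lborel) (borel::real measure) = measurable ((borel \<Otimes>\<^sub>M M) \<Otimes>\<^sub>M borel) borel"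
      by (intro measurable_cong_sets sets_pair_measure_cong) simp_all
    have e2: "(\<lambda>(p, s). indicator {0..fst p} s *\<^sub>R g (s, snd p)) = (\<lambda>x. (if 0 \<le> snd x \<and> snd x \<le> fst (fst x) then 1 else 0) * g (snd x, snd (fst x)))"
      by (auto simp: indicator_def fun_eq_iff)
    have "(\<lambda>x. (if 0 \<le> snd x \<and> snd x \<le> fst (fst x) then 1 else 0) * g (snd x, snd (fst x))) \<in> borel_measurable ((borel \<Otimes>\<^sub>M M) \<Otimes>\<^sub>M (borel::real measure))"
      by measurable
    then show ?thesis unfolding e e2 .
  qed
qed

lemma rat_dense_ge:
  fixes g :: "real \<Rightarrow> real"
  assumes cont: "continuous_on {0..1} g"
    and q: "\<And>q::rat. 0 \<le> q \<Longrightarrow> q \<le> 1 \<Longrightarrow> e \<le> g (real_of_rat q)"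
    and x: "x \<in> {0..1}"
  shows "e \<le> g x"
proof -
  have cl: "closure ({0..1::real} \<inter> \<rat>) = {0..1}"
  proof -
    have "closure ({0..1::real} \<inter> \<rat>) = closure {0..1}"
      by (rule closure_convex_Int_superset) (auto simp: Rats_closure_real)
    then show ?thesis by simp
  qed
  show ?thesis
  proof (rule continuous_ge_on_closure[where S="{0..1} \<inter> \<rat>" and f=g and x=x])
    show "continuous_on (closure ({0..1} \<inter> \<rat>)) g" using cont cl by simp
    show "x \<in> closure ({0..1} \<inter> \<rat>)" using x cl by simp
    fix y assume "y \<in> {0..1::real} \<inter> \<rat>"
    then obtain r where "y = real_of_rat r" "0 \<le> r" "r \<le> 1"
      by (auto elim!: Rats_cases)
    then show "e \<le> g y" using q by simp
  qed
qed

lemma halfopen_pos_iff: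
  fixes F :: "real \<Rightarrow> real"
  assumes cont: "continuous_on {lo..hi} F"
  shows "(\<forall>t. lo \<le> t \<and> t < hi \<longrightarrow> F t > 0) \<longleftrightarrow>
    (\<forall>m::nat. \<exists>e::rat. 0 < e \<and> (\<forall>r::rat. 0 \<le> r \<and> r \<le> 1 \<and> lo \<le> hi - 1 / real (Suc m) \<longrightarrow>
        real_of_rat e \<le> F (lo + real_of_rat r * (hi - 1 / real (Suc m) - lo))))"
proof
  assume pos: "\<forall>t. lo \<le> t \<and> t < hi \<longrightarrow> F t > 0"
  show "\<forall>m::nat. \<exists>e::rat. 0 < e \<and> (\<forall>r::rat. 0 \<le> r \<and> r \<le> 1 \<and> lo \<le> hi - 1 / real (Suc m) \<longrightarrow>
        real_of_rat e \<le> F (lo + real_of_rat r * (hi - 1 / real (Suc m) - lo)))"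
  proof
    fix m :: nat
    define h where "h = hi - 1 / real (Suc m)"
    have hhi: "h < hi" unfolding h_def by simp
    show "\<exists>e::rat. 0 < e \<and> (\<forall>r::rat. 0 \<le> r \<and> r \<le> 1 \<and> lo \<le> hi - 1 / real (Suc m) \<longrightarrow>
        real_of_rat e \<le> F (lo + real_of_rat r * (hi - 1 / real (Suc m) - lo)))"
    proof (cases "lo \<le> h")
      case False
      then show ?thesis unfolding h_def by (intro exI[of _ 1]) auto
    next
      case True
      have "continuous_on {lo..h} F" using hhi by (intro continuous_on_subset[OF cont]) auto
      then obtain x where x: "x \<in> {lo..h}" and xmin: "\<And>y. y \<in> {lo..h} \<Longrightarrow> F x \<le> F y"
        using continuous_attains_inf[of "{lo..h}" F] True by auto
      have "F x > 0" using pos x hhi by auto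
      then obtain q where q: "q \<in> \<rat>" "0 < q" "q < F x" using Rats_dense_in_real by blast
      then obtain e where e: "q = real_of_rat e" by (auto elim: Rats_cases)
      show ?thesis
      proof (intro exI[of _ e] conjI allI impI)
        show "0 < e" using q e by simp
        fix r :: rat assume r: "0 \<le> r \<and> r \<le> 1 \<and> lo \<le> hi - 1 / real (Suc m)"
        have r0: "0 \<le> real_of_rat r" and r1: "real_of_rat r \<le> 1" using r by auto
        have "lo \<le> lo + real_of_rat r * (h - lo)" using r0 True by simp
        moreover have "real_of_rat r * (h - lo) \<le> 1 * (h - lo)"
          using r1 True by (intro mult_right_mono) auto
        ultimately have "lo + real_of_rat r * (h - lo) \<in> {lo..h}" by auto
        from xmin[OF this] q e show "real_of_rat e \<le> F (lo + real_of_rat r * (hi - 1 / real (Suc m) - lo))"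
          unfolding h_def by simp
      qed
    qed
  qed
next
  assume H: "\<forall>m::nat. \<exists>e::rat. 0 < e \<and> (\<forall>r::rat. 0 \<le> r \<and> r \<le> 1 \<and> lo \<le> hi - 1 / real (Suc m) \<longrightarrow>
        real_of_rat e \<le> F (lo + real_of_rat r * (hi - 1 / real (Suc m) - lo)))"
  show "\<forall>t. lo \<le> t \<and> t < hi \<longrightarrow> F t > 0"
  proof (intro allI impI)
    fix t assume t: "lo \<le> t \<and> t < hi"
    obtain m :: nat where m: "inverse (real (Suc m)) < hi - t"
      using reals_Archimedean[of "hi - t"] t by auto
    define h where "h = hi - 1 / real (Suc m)"
    have th: "t \<le> h" using m unfolding h_def by (simp add: field_simps)
    obtain e :: rat where e0: "0 < e" and e: "\<And>r::rat. 0 \<le> r \<Longrightarrow> r \<le> 1 \<Longrightarrow> lo \<le> h \<Longrightarrow>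
        real_of_rat e \<le> F (lo + real_of_rat r * (h - lo))"
      using H unfolding h_def by blast
    have lh: "lo \<le> h" using th t by simp
    have "real_of_rat e \<le> F t"
    proof (cases "h = lo")
      case True
      then have "t = lo" using th t by simp
      then show ?thesis using e[of 0] lh by simp
    next
      case False
      then have hl: "lo < h" using lh by simp
      define G where "G r = F (lo + r * (h - lo))" for r
      have contF: "continuous_on {lo..h} F"
        using th t unfolding h_def by (intro continuous_on_subset[OF cont]) auto
      have "continuous_on {0..1} G"
        unfolding G_def
      proof (rule continuous_on_compose2[OF contF])
        show "continuous_on {0..1} (\<lambda>x. lo + x * (h - lo))" by (intro continuous_intros)
        show "(\<lambda>x. lo + x * (h - lo)) ` {0..1} \<subseteq> {lo..h}"
        proof (rule image_subsetI)
          fix x :: real assume x: "x \<in> {0..1}"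
          have "x * (h - lo) \<le> 1 * (h - lo)" using x hl by (intro mult_right_mono) auto
          moreover have "0 \<le> x * (h - lo)" using x hl by simp
          ultimately show "lo + x * (h - lo) \<in> {lo..h}" by simp
        qed
      qed
      moreover have "(t - lo) / (h - lo) \<in> {0..1}" using hl th t by (auto simp: field_simps)
      ultimately have "real_of_rat e \<le> G ((t - lo) / (h - lo))"
        using rat_dense_ge[of G "real_of_rat e" "(t - lo) / (h - lo)"] e lh unfolding G_def by auto
      then show ?thesis unfolding G_def using hl by simp
    qed
    then show "F t > 0" using e0 by (metis of_rat_less_eq of_rat_0 less_le_trans of_rat_less)
  qed
qed



locale ruin = prob_space M for M :: "'w measure" +
  fixes W :: "real \<Rightarrow> 'w \<Rightarrow> real" and E :: "nat \<Rightarrow> 'w \<Rightarrow> real" and \<xi> :: "nat \<Rightarrow> 'w \<Rightarrow> real"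
    and lam c a \<sigma> :: real
  assumes BM: "std_brownian_motion M W"
    and lam: "lam > 0"
    and Ed: "\<And>n. distributed M lborel (E n) (exponential_density lam)"
    and \<xi>m[measurable]: "\<And>n. \<xi> n \<in> borel_measurable M"
    and \<xi>pos: "\<And>n \<omega>. \<omega> \<in> space M \<Longrightarrow> \<xi> n \<omega> > 0"
    and indep: "indep_vars (\<lambda>_. borel) (\<lambda>i \<omega>. case i of Inl n \<Rightarrow> E n \<omega> | Inr n \<Rightarrow> \<xi> n \<omega>) UNIV"
    and c: "c > 0" and \<sigma>: "\<sigma> > 0"
begin

lemma E_meas[measurable]: "E n \<in> borel_measurable M"
  using distributed_measurable[OF Ed[of n]] by simp

lemma W_meas[measurable]: "W t \<in> borel_measurable M"
  using BM unfolding std_brownian_motion_def by blast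

lemma W0: "\<omega> \<in> space M \<Longrightarrow> W 0 \<omega> = 0"
  using BM unfolding std_brownian_motion_def by blast

lemma W_cont: "\<omega> \<in> space M \<Longrightarrow> continuous_on {0..} (\<lambda>t. W t \<omega>)"
  using BM unfolding std_brownian_motion_def by blast

lemma jt_meas[measurable]: "(\<lambda>\<omega>. jump_time E k \<omega>) \<in> borel_measurable M"
  unfolding jump_time_def by measurable

lemma null_E_nonpos: "{\<omega>\<in>space M. E n \<omega> \<le> 0} \<in> null_sets M"
proof -
  have "prob {\<omega>\<in>space M. E n \<omega> \<le> 0} = 1 - exp (- 0 * lam)"
    using exponential_distributedD_le[OF Ed[of n] _ lam, of 0] by simp
  then have "prob {\<omega>\<in>space M. E n \<omega> \<le> 0} = 0" by simp
  then show ?thesis by (intro null_setsI) (auto simp: emeasure_eq_measure)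
qed

lemma null_E_small: "{\<omega>\<in>space M. \<forall>i. m \<le> i \<longrightarrow> E i \<omega> \<le> 1} \<in> null_sets M"
proof -
  let ?X = "\<lambda>i \<omega>. case i of Inl n \<Rightarrow> E n \<omega> | Inr n \<Rightarrow> \<xi> n \<omega>"
  let ?A = "{\<omega>\<in>space M. \<forall>i. m \<le> i \<longrightarrow> E i \<omega> \<le> 1}"
  define q where "q = 1 - exp (- 1 * lam)"
  have q0: "0 \<le> q" and q1: "q < 1" using lam by (auto simp: q_def)
  have pE: "prob {\<omega>\<in>space M. E i \<omega> \<le> 1} = q" for i
    using exponential_distributedD_le[OF Ed[of i] _ lam, of 1] by (simp add: q_def)
  have Ameas: "?A \<in> sets M" by measurable
  have bound: "prob ?A \<le> q ^ Suc n" for n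
  proof -
    let ?J = "Inl ` {m..<m + Suc n} :: (nat + nat) set"
    let ?B = "\<lambda>j. ?X j -` {..1} \<inter> space M"
    have ind: "indep_sets (\<lambda>i. { ?X i -` A \<inter> space M | A. A \<in> sets borel}) UNIV"
      using indep unfolding indep_vars_def2 by blast
    have "prob (\<Inter>j\<in>?J. ?B j) = (\<Prod>j\<in>?J. prob (?B j))"
      by (rule indep_setsD[OF ind]) (auto intro!: exI[of _ "{..1}"])
    also have "\<dots> = (\<Prod>i\<in>{m..<m + Suc n}. prob (?B (Inl i)))"
      by (subst prod.reindex) (auto simp: inj_on_def)
    also have "\<dots> = (\<Prod>i\<in>{m..<m + Suc n}. q)"
    proof (rule prod.cong[OF refl])
      fix i
      have "?B (Inl i) = {\<omega>\<in>space M. E i \<omega> \<le> 1}" by auto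
      then show "prob (?B (Inl i)) = q" using pE by simp
    qed
    also have "\<dots> = q ^ Suc n" by simp
    finally have eq: "prob (\<Inter>j\<in>?J. ?B j) = q ^ Suc n" .
    have "?A \<subseteq> (\<Inter>j\<in>?J. ?B j)" by auto
    moreover have "(\<Inter>j\<in>?J. ?B j) \<in> sets M"
      by (intro sets.finite_INT) auto
    ultimately have "prob ?A \<le> prob (\<Inter>j\<in>?J. ?B j)"
      by (intro finite_measure_mono)
    then show ?thesis using eq by simp
  qed
  have "(\<lambda>n. q ^ Suc n) \<longlonglongrightarrow> 0"
    using LIMSEQ_Suc[OF LIMSEQ_power_zero[of q]] q0 q1 by simp
  then have "prob ?A \<le> 0"
    by (rule LIMSEQ_le_const) (use bound in blast)
  then have "prob ?A = 0" by (simp add: antisym)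
  then show ?thesis using Ameas by (intro null_setsI) (auto simp: emeasure_eq_measure)
qed

definition "G = {\<omega>\<in>space M. (\<forall>i. 0 < E i \<omega>) \<and> (\<forall>n::nat. \<exists>k. real n < jump_time E k \<omega>)}"

lemma G_sets[measurable]: "G \<in> sets M"
  unfolding G_def by measurable

lemma jt_Suc: "jump_time E (Suc k) \<omega> = jump_time E k \<omega> + E (Suc k) \<omega>"
  unfolding jump_time_def by simp

lemma jt_mono:
  assumes pos: "\<forall>i. 0 < E i \<omega>" and "k \<le> i"
  shows "jump_time E k \<omega> \<le> jump_time E i \<omega>"
  using assms(2)
proof (induction i)
  case 0 then show ?case by simp
next
  case (Suc i)
  then show ?case
  proof (cases "k = Suc i")
    case False
    then have "jump_time E k \<omega> \<le> jump_time E i \<omega>" using Suc by simp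
    then show ?thesis using jt_Suc[of i \<omega>] pos[rule_format, of "Suc i"] by simp
  qed simp
qed

lemma jt_less:
  assumes pos: "\<forall>i. 0 < E i \<omega>" and "k < i"
  shows "jump_time E k \<omega> + E i \<omega> \<le> jump_time E i \<omega>"
proof -
  obtain j where i: "i = Suc j" and "k \<le> j" using assms(2) by (cases i) auto
  then have "jump_time E k \<omega> \<le> jump_time E j \<omega>" using jt_mono[OF pos] by simp
  then show ?thesis using jt_Suc[of j \<omega>] i by simp
qed

lemma jt_pos: "\<forall>i. 0 < E i \<omega> \<Longrightarrow> 0 < jump_time E k \<omega>"
  using jt_mono[of \<omega> 0 k] by (simp add: jump_time_def) (smt (verit))

lemma jt_strict:
  assumes pos: "\<forall>i. 0 < E i \<omega>" and "k < i"
  shows "jump_time E k \<omega> < jump_time E i \<omega>"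
  using jt_less[OF assms] pos[rule_format, of i] by simp

lemma G_null: "space M - G \<in> null_sets M"
proof -
  have sub: "space M - G \<subseteq> (\<Union>n. {\<omega>\<in>space M. E n \<omega> \<le> 0}) \<union> (\<Union>m. {\<omega>\<in>space M. \<forall>i. m \<le> i \<longrightarrow> E i \<omega> \<le> 1})"
  proof
    fix \<omega> assume w: "\<omega> \<in> space M - G"
    show "\<omega> \<in> (\<Union>n. {\<omega>\<in>space M. E n \<omega> \<le> 0}) \<union> (\<Union>m. {\<omega>\<in>space M. \<forall>i. m \<le> i \<longrightarrow> E i \<omega> \<le> 1})"
    proof (cases "\<forall>i. 0 < E i \<omega>")
      case False
      then show ?thesis using w by (auto simp: not_less)
    next
      case pos: True
      have "\<exists>m. \<forall>i. m \<le> i \<longrightarrow> E i \<omega> \<le> 1"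
      proof (rule ccontr)
        assume "\<nexists>m. \<forall>i. m \<le> i \<longrightarrow> E i \<omega> \<le> 1"
        then have big: "\<And>m. \<exists>i\<ge>m. 1 < E i \<omega>" by (auto simp: not_le)
        have "\<exists>k. real N < jump_time E k \<omega>" for N :: nat
        proof (induction N)
          case 0 then show ?case using jt_pos[OF pos, of 0] by auto
        next
          case (Suc N)
          then obtain k where k: "real N < jump_time E k \<omega>" by blast
          obtain i where i: "Suc k \<le> i" "1 < E i \<omega>" using big by blast
          have "jump_time E k \<omega> + E i \<omega> \<le> jump_time E i \<omega>" using jt_less[OF pos] i by simp
          then have "real (Suc N) < jump_time E i \<omega>" using k i by simp
          then show ?case by blast
        qed
        then show False using w pos unfolding G_def by auto
      qed
      then show ?thesis using w by auto
    qed
  qed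
  have "(\<Union>n. {\<omega>\<in>space M. E n \<omega> \<le> 0}) \<union> (\<Union>m. {\<omega>\<in>space M. \<forall>i. m \<le> i \<longrightarrow> E i \<omega> \<le> 1}) \<in> null_sets M"
    using null_E_nonpos null_E_small by (intro null_sets.Un null_sets_UN) auto
  moreover have "space M - G \<in> sets M" by measurable
  ultimately show ?thesis using sub null_sets_subset by blast
qed

definition "gm t \<omega> = exp ((a - \<sigma>\<^sup>2 / 2) * t + \<sigma> * W (max 0 t) \<omega>)"
definition "Ih t \<omega> = integral {0..t} (\<lambda>s. 1 / gm s \<omega>)"
definition "F u k t \<omega> = gm t \<omega> * (u - c * Ih t \<omega> + (\<Sum>j<k. \<xi> j \<omega> / gm (jump_time E j \<omega>) \<omega>))"
definition "lo k \<omega> = (if k = 0 then 0 else jump_time E (k - 1) \<omega>)"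

lemma Wm_cont: "\<omega> \<in> space M \<Longrightarrow> continuous_on UNIV (\<lambda>t. W (max 0 t) \<omega>)"
  by (rule continuous_on_compose2[OF W_cont]) (auto intro!: continuous_intros)

lemma gm_cont: "\<omega> \<in> space M \<Longrightarrow> continuous_on UNIV (\<lambda>t. gm t \<omega>)"
  unfolding gm_def by (intro continuous_intros Wm_cont)

lemma gm_pos: "gm t \<omega> > 0" unfolding gm_def by simp

lemma gm_joint[measurable]: "(\<lambda>p. gm (fst p) (snd p)) \<in> borel_measurable (borel \<Otimes>\<^sub>M M)"
proof -
  have "(\<lambda>p. W (max 0 (fst p)) (snd p)) \<in> borel_measurable (borel \<Otimes>\<^sub>M M)"
    using joint_meas[of "\<lambda>t. W (max 0 t)" M] Wm_cont by simp
  then show ?thesis unfolding gm_def by measurable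
qed

lemma Ih_eq: "\<omega> \<in> space M \<Longrightarrow> Ih t \<omega> = (LINT s:{0..t}|lborel. 1 / gm s \<omega>)"
proof -
  assume w: "\<omega> \<in> space M"
  have "continuous_on {0..t} (\<lambda>s. 1 / gm s \<omega>)"
    by (intro continuous_intros continuous_on_subset[OF gm_cont[OF w]]) (auto simp: gm_def)
  then have "set_integrable lborel {0..t} (\<lambda>s. 1 / gm s \<omega>)"
    unfolding set_integrable_def by (intro borel_integrable_compact) auto
  from set_borel_integral_eq_integral(2)[OF this] show ?thesis unfolding Ih_def by simp
qed

lemma Ih_joint[measurable]: "(\<lambda>p. Ih (fst p) (snd p)) \<in> borel_measurable (borel \<Otimes>\<^sub>M M)"
proof -
  have "(\<lambda>p. LINT s:{0..fst p}|lborel. (\<lambda>q. 1 / gm (fst q) (snd q)) (s, snd p)) \<in> borel_measurable (borel \<Otimes>\<^sub>M M)"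
    by (rule integral_joint_meas) measurable
  then show ?thesis
    by (rule measurable_cong[THEN iffD1, rotated]) (auto simp: Ih_eq space_pair_measure)
qed

lemma rt_meas:
  assumes f: "(\<lambda>p. f (fst p) (snd p)) \<in> borel_measurable (borel \<Otimes>\<^sub>M M)"
    and tau: "\<tau> \<in> borel_measurable M"
  shows "(\<lambda>\<omega>. f (\<tau> \<omega>) \<omega>) \<in> borel_measurable M"
  using measurable_compose[OF measurable_Pair[OF tau measurable_ident_sets[OF refl]] f] by simp

lemma gm_rt[measurable (raw)]: "\<tau> \<in> borel_measurable M \<Longrightarrow> (\<lambda>\<omega>. gm (\<tau> \<omega>) \<omega>) \<in> borel_measurable M"
  by (rule rt_meas[OF gm_joint])

lemma Ih_rt[measurable (raw)]: "\<tau> \<in> borel_measurable M \<Longrightarrow> (\<lambda>\<omega>. Ih (\<tau> \<omega>) \<omega>) \<in> borel_measurable M"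
  by (rule rt_meas[OF Ih_joint])

lemma F_rt[measurable (raw)]:
  assumes tau[measurable]: "\<tau> \<in> borel_measurable M"
  shows "(\<lambda>\<omega>. F u k (\<tau> \<omega>) \<omega>) \<in> borel_measurable M"
proof -
  have [measurable]: "(\<lambda>\<omega>. Ih (\<tau> \<omega>) \<omega>) \<in> borel_measurable M" "(\<lambda>\<omega>. gm (\<tau> \<omega>) \<omega>) \<in> borel_measurable M"
    by (rule Ih_rt[OF tau], rule gm_rt[OF tau])
  have [measurable]: "(\<lambda>\<omega>. gm (jump_time E j \<omega>) \<omega>) \<in> borel_measurable M" for j
    by (rule gm_rt) measurable
  show ?thesis unfolding F_def by measurable
qed

lemma lo_meas[measurable]: "lo k \<in> borel_measurable M"
  unfolding lo_def by measurable

definition "Good u = {\<omega>\<in>G. \<forall>k. \<forall>m::nat. \<exists>e::rat. 0 < e \<and> (\<forall>r::rat. 0 \<le> r \<and> r \<le> 1 \<and> lo k \<omega> \<le> jump_time E k \<omega> - 1 / real (Suc m) \<longrightarrow>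
        real_of_rat e \<le> F u k (lo k \<omega> + real_of_rat r * (jump_time E k \<omega> - 1 / real (Suc m) - lo k \<omega>)) \<omega>)}"

lemma Good_sets: "Good u \<in> sets M"
  unfolding Good_def by measurable

lemma geo_eq: "0 \<le> t \<Longrightarrow> geo_factor a \<sigma> W t \<omega> = gm t \<omega>"
  unfolding geo_factor_def gm_def by simp

lemma G_pos: "\<omega> \<in> G \<Longrightarrow> \<forall>i. 0 < E i \<omega>"
  unfolding G_def by blast

lemma G_space: "\<omega> \<in> G \<Longrightarrow> \<omega> \<in> space M"
  unfolding G_def by blast

lemma lo_nonneg: "\<omega> \<in> G \<Longrightarrow> 0 \<le> lo k \<omega>"
  unfolding lo_def using jt_pos[OF G_pos] by (auto intro: less_imp_le)

lemma lo_less: "\<omega> \<in> G \<Longrightarrow> lo k \<omega> < jump_time E k \<omega>"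
  unfolding lo_def using jt_pos[OF G_pos] jt_strict[OF G_pos] by auto

lemma jumpset_eq:
  assumes w: "\<omega> \<in> G" and t: "lo k \<omega> \<le> t" "t < jump_time E k \<omega>"
  shows "{j. jump_time E j \<omega> \<le> t} = {..<k}"
proof safe
  fix j assume "jump_time E j \<omega> \<le> t"
  then show "j < k" using t jt_mono[OF G_pos[OF w], of k j] by (cases "k \<le> j") auto
next
  fix j assume j: "j < k"
  then have "jump_time E j \<omega> \<le> jump_time E (k - 1) \<omega>" using jt_mono[OF G_pos[OF w], of j "k - 1"] by simp
  then show "jump_time E j \<omega> \<le> t" using t j unfolding lo_def by simp
qed

lemma capital_eq:
  assumes w: "\<omega> \<in> G" and t: "lo k \<omega> \<le> t" "t < jump_time E k \<omega>"
  shows "capital a c \<sigma> W E \<xi> u t \<omega> = F u k t \<omega>"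
proof -
  have t0: "0 \<le> t" using lo_nonneg[OF w, of k] t by simp
  have i: "integral {0..t} (\<lambda>s. 1 / geo_factor a \<sigma> W s \<omega>) = Ih t \<omega>"
    unfolding Ih_def by (rule integral_cong) (simp add: geo_eq)
  have s: "(\<Sum>j\<in>{j. jump_time E j \<omega> \<le> t}. \<xi> j \<omega> / geo_factor a \<sigma> W (jump_time E j \<omega>) \<omega>)
      = (\<Sum>j<k. \<xi> j \<omega> / gm (jump_time E j \<omega>) \<omega>)"
    unfolding jumpset_eq[OF w t]
    by (rule sum.cong[OF refl]) (simp add: geo_eq less_imp_le jt_pos[OF G_pos[OF w]])
  show ?thesis unfolding capital_def F_def i s geo_eq[OF t0] ..
qed

lemma cover:
  assumes w: "\<omega> \<in> G" and t: "0 \<le> t"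
  shows "\<exists>k. lo k \<omega> \<le> t \<and> t < jump_time E k \<omega>"
proof -
  obtain n :: nat where n: "t < real n" using reals_Archimedean2 by blast
  obtain k0 where "real n < jump_time E k0 \<omega>" using w unfolding G_def by blast
  then have "t < jump_time E k0 \<omega>" using n by simp
  define k where "k = (LEAST k. t < jump_time E k \<omega>)"
  have k: "t < jump_time E k \<omega>" unfolding k_def by (rule LeastI) fact
  have "lo k \<omega> \<le> t"
  proof (cases k)
    case 0 then show ?thesis using t unfolding lo_def by simp
  next
    case (Suc j)
    have "\<not> t < jump_time E j \<omega>"
    proof
      assume "t < jump_time E j \<omega>"
      then have "k \<le> j" unfolding k_def by (rule Least_le)
      then show False using Suc by simp
    qed
    then show ?thesis using Suc unfolding lo_def by simp
  qed
  then show ?thesis using k by blast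
qed

lemma F_cont:
  assumes w: "\<omega> \<in> space M" and l: "0 \<le> l"
  shows "continuous_on {l..h} (\<lambda>t. F u k t \<omega>)"
proof -
  have "continuous_on {0..h} (\<lambda>s. 1 / gm s \<omega>)"
    by (intro continuous_intros continuous_on_subset[OF gm_cont[OF w]]) (auto simp: gm_def)
  then have "(\<lambda>s. 1 / gm s \<omega>) integrable_on {0..h}"
    by (rule integrable_continuous_interval)
  then have "continuous_on {0..h} (\<lambda>t. Ih t \<omega>)"
    unfolding Ih_def by (rule indefinite_integral_continuous_1)
  then have "continuous_on {l..h} (\<lambda>t. Ih t \<omega>)"
    by (rule continuous_on_subset) (use l in auto)
  then show ?thesis unfolding F_def
    by (intro continuous_intros continuous_on_subset[OF gm_cont[OF w]]) auto
qed

lemma surv_iff: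
  assumes w: "\<omega> \<in> G"
  shows "\<omega> \<in> survival_event M a c \<sigma> W E \<xi> u \<longleftrightarrow> \<omega> \<in> Good u"
proof -
  have "\<omega> \<in> survival_event M a c \<sigma> W E \<xi> u \<longleftrightarrow> (\<forall>t\<ge>0. capital a c \<sigma> W E \<xi> u t \<omega> > 0)"
    using G_space[OF w] unfolding survival_event_def by simp
  also have "\<dots> \<longleftrightarrow> (\<forall>k t. lo k \<omega> \<le> t \<and> t < jump_time E k \<omega> \<longrightarrow> F u k t \<omega> > 0)"
  proof safe
    fix k t assume H: "\<forall>t\<ge>0. 0 < capital a c \<sigma> W E \<xi> u t \<omega>" and t: "lo k \<omega> \<le> t" "t < jump_time E k \<omega>"
    have "0 \<le> t" using t lo_nonneg[OF w, of k] by simp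
    then have "0 < capital a c \<sigma> W E \<xi> u t \<omega>" using H by simp
    then show "0 < F u k t \<omega>" using capital_eq[OF w t] by simp
  next
    fix t :: real assume H: "\<forall>k t. lo k \<omega> \<le> t \<and> t < jump_time E k \<omega> \<longrightarrow> 0 < F u k t \<omega>" and t: "0 \<le> t"
    obtain k where "lo k \<omega> \<le> t" "t < jump_time E k \<omega>" using cover[OF w t] by blast
    then show "0 < capital a c \<sigma> W E \<xi> u t \<omega>" using H capital_eq[OF w] by simp
  qed
  also have "\<dots> \<longleftrightarrow> (\<forall>k. \<forall>m::nat. \<exists>e::rat. 0 < e \<and> (\<forall>r::rat. 0 \<le> r \<and> r \<le> 1 \<and> lo k \<omega> \<le> jump_time E k \<omega> - 1 / real (Suc m) \<longrightarrow>
        real_of_rat e \<le> F u k (lo k \<omega> + real_of_rat r * (jump_time E k \<omega> - 1 / real (Suc m) - lo k \<omega>)) \<omega>))"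
    using halfopen_pos_iff[OF F_cont[OF G_space[OF w] lo_nonneg[OF w]]] by blast
  also have "\<dots> \<longleftrightarrow> \<omega> \<in> Good u" using w unfolding Good_def by blast
  finally show ?thesis .
qed

lemma surv_sets:
  assumes cm: "complete_measure M"
  shows "survival_event M a c \<sigma> W E \<xi> u \<in> sets M"
proof -
  have eq: "survival_event M a c \<sigma> W E \<xi> u = Good u \<union> (survival_event M a c \<sigma> W E \<xi> u - G)"
    using surv_iff unfolding Good_def by blast
  have "survival_event M a c \<sigma> W E \<xi> u - G \<subseteq> space M - G"
    unfolding survival_event_def by blast
  then have "survival_event M a c \<sigma> W E \<xi> u - G \<in> sets M"
    using complete_measure.complete[OF cm _ G_null] by blast
  then show ?thesis using Good_sets by (subst eq) (rule sets.Un)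
qed

lemma prob_G: "prob G = 1"
proof -
  have "prob (space M - G) = 0" using null_setsD1[OF G_null] by (simp add: measure_def)
  then show ?thesis using prob_compl[OF G_sets] by simp
qed

definition "Hs n = {\<omega>\<in>G. 1 / real (Suc n) < E 0 \<omega> \<and>
   (\<forall>q::rat. 0 \<le> real_of_rat q \<and> real_of_rat q \<le> 1 / real (Suc n) \<longrightarrow> W (real_of_rat q) \<omega> \<le> 1)}"

lemma Hs_sets[measurable]: "Hs n \<in> sets M"
  unfolding Hs_def by measurable

lemma Hs_inc: "incseq Hs"
proof (rule incseq_SucI)
  fix n
  have "1 / real (Suc (Suc n)) \<le> 1 / real (Suc n)" by (simp add: frac_le)
  then show "Hs n \<subseteq> Hs (Suc n)" unfolding Hs_def by force
qed

lemma G_sub_Hs: "G \<subseteq> (\<Union>n. Hs n)"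
proof
  fix \<omega> assume w: "\<omega> \<in> G"
  have sp: "\<omega> \<in> space M" using G_space[OF w] .
  have e0: "0 < E 0 \<omega>" using G_pos[OF w] by blast
  from W_cont[OF sp] have "\<exists>d>0. \<forall>x'\<in>{0..}. dist x' 0 < d \<longrightarrow> dist (W x' \<omega>) (W 0 \<omega>) < 1"
    unfolding continuous_on_iff by (meson atLeast_iff order_refl zero_less_one)
  then obtain d where d: "d > 0" and dd0: "\<forall>x'\<in>{0..}. dist x' 0 < d \<longrightarrow> dist (W x' \<omega>) (W 0 \<omega>) < 1"
    by blast
  have dd: "W x' \<omega> < 1" if "0 \<le> x'" "x' < d" for x'
    using dd0[rule_format, of x'] W0[OF sp] that by (auto simp: dist_real_def)
  obtain n :: nat where n: "inverse (real (Suc n)) < min d (E 0 \<omega>)"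
    using reals_Archimedean[of "min d (E 0 \<omega>)"] d e0 by auto
  have "\<omega> \<in> Hs n" unfolding Hs_def
  proof (intro CollectI conjI allI impI)
    show "\<omega> \<in> G" by fact
    show "1 / real (Suc n) < E 0 \<omega>" using n by (simp add: inverse_eq_divide)
    fix q :: rat assume "0 \<le> real_of_rat q \<and> real_of_rat q \<le> 1 / real (Suc n)"
    then show "W (real_of_rat q) \<omega> \<le> 1" using dd n by (simp add: inverse_eq_divide less_imp_le)
  qed
  then show "\<omega> \<in> (\<Union>n. Hs n)" by blast
qed

lemma Hs_lim: "(\<lambda>n. prob (Hs n)) \<longlonglongrightarrow> 1"
proof -
  have "(\<lambda>n. prob (Hs n)) \<longlonglongrightarrow> prob (\<Union>n. Hs n)"
    by (rule finite_Lim_measure_incseq) (auto simp: Hs_inc)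
  moreover have "prob (\<Union>n. Hs n) = 1"
  proof (rule antisym)
    show "prob (\<Union>n. Hs n) \<le> 1" by simp
    have "prob G \<le> prob (\<Union>n. Hs n)"
      using G_sub_Hs by (intro finite_measure_mono) auto
    then show "1 \<le> prob (\<Union>n. Hs n)" using prob_G by simp
  qed
  ultimately show ?thesis by simp
qed

definition "mm = exp (- \<bar>a - \<sigma>\<^sup>2 / 2\<bar> - \<sigma>)"

lemma Hs_W:
  assumes w: "\<omega> \<in> Hs n" and s: "0 \<le> s" "s \<le> 1 / real (Suc n)"
  shows "W s \<omega> \<le> 1"
proof -
  let ?t = "1 / real (Suc n)"
  have sp: "\<omega> \<in> space M" using w unfolding Hs_def G_def by blast
  have cl: "closure ({0..?t} \<inter> \<rat>) = {0..?t}"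
  proof -
    have "closure ({0..?t} \<inter> \<rat>) = closure {0..?t}"
      by (rule closure_convex_Int_superset) (auto simp: Rats_closure_real)
    then show ?thesis by simp
  qed
  show ?thesis
  proof (rule continuous_le_on_closure[where S="{0..?t} \<inter> \<rat>" and f="\<lambda>x. W x \<omega>" and x=s])
    show "continuous_on (closure ({0..?t} \<inter> \<rat>)) (\<lambda>x. W x \<omega>)"
      using cl by (simp add: continuous_on_subset[OF W_cont[OF sp]])
    show "s \<in> closure ({0..?t} \<inter> \<rat>)" using cl s by simp
    fix y assume "y \<in> {0..?t} \<inter> \<rat>"
    then obtain r where "y = real_of_rat r" "0 \<le> real_of_rat r" "real_of_rat r \<le> ?t"
      by (auto elim!: Rats_cases)
    then show "W y \<omega> \<le> 1" using w unfolding Hs_def by blast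
  qed
qed

lemma Hs_not_surv:
  assumes w: "\<omega> \<in> Hs n" and u: "u \<le> c * mm / real (Suc n)"
  shows "\<omega> \<notin> survival_event M a c \<sigma> W E \<xi> u"
proof
  assume surv: "\<omega> \<in> survival_event M a c \<sigma> W E \<xi> u"
  let ?t = "1 / real (Suc n)"
  have wG: "\<omega> \<in> G" and sp: "\<omega> \<in> space M" and tE: "?t < E 0 \<omega>"
    using w unfolding Hs_def G_def by auto
  have t0: "0 \<le> ?t" by simp
  have t1: "?t \<le> 1" by simp
  have "capital a c \<sigma> W E \<xi> u ?t \<omega> > 0" using surv t0 unfolding survival_event_def by blast
  moreover have "capital a c \<sigma> W E \<xi> u ?t \<omega> = F u 0 ?t \<omega>"
    using tE by (intro capital_eq[OF wG]) (auto simp: lo_def jump_time_def)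
  ultimately have "0 < gm ?t \<omega> * (u - c * Ih ?t \<omega>)" unfolding F_def by simp
  then have pos: "c * Ih ?t \<omega> < u" using gm_pos[of ?t \<omega>] by (simp add: zero_less_mult_iff)
  have low: "mm \<le> 1 / gm s \<omega>" if s: "s \<in> {0..?t}" for s
  proof -
    have s0: "0 \<le> s" using s by auto
    have s1: "s \<le> 1" using s t1 by (meson atLeastAtMost_iff order_trans)
    have Ws: "W s \<omega> \<le> 1" using Hs_W[OF w] s by auto
    have "1 / gm s \<omega> = inverse (exp ((a - \<sigma>\<^sup>2 / 2) * s + \<sigma> * W s \<omega>))"
      using s0 by (simp add: gm_def inverse_eq_divide)
    also have "\<dots> = exp (- ((a - \<sigma>\<^sup>2 / 2) * s + \<sigma> * W s \<omega>))"
      by (rule exp_minus[symmetric])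
    finally have "1 / gm s \<omega> = exp (- ((a - \<sigma>\<^sup>2 / 2) * s + \<sigma> * W s \<omega>))" .
    moreover have "\<bar>(a - \<sigma>\<^sup>2 / 2) * s\<bar> \<le> \<bar>a - \<sigma>\<^sup>2 / 2\<bar>"
      using s0 s1 by (simp add: abs_mult mult_left_le)
    moreover have "\<sigma> * W s \<omega> \<le> \<sigma>" using Ws \<sigma> by (simp add: mult_left_le)
    ultimately show ?thesis unfolding mm_def by simp
  qed
  have "continuous_on {0..?t} (\<lambda>s. 1 / gm s \<omega>)"
    by (intro continuous_intros continuous_on_subset[OF gm_cont[OF sp]]) (auto simp: gm_def)
  then have "integral {0..?t} (\<lambda>s. mm) \<le> Ih ?t \<omega>"
    unfolding Ih_def by (intro integral_le integrable_continuous_interval) (auto intro: low)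
  then have "mm * ?t \<le> Ih ?t \<omega>" by simp
  then have "c * (mm * ?t) \<le> c * Ih ?t \<omega>" using c by (intro mult_left_mono) auto
  moreover have "c * (mm * ?t) = c * mm / real (Suc n)" by simp
  ultimately show False using pos u by linarith
qed


lemma surv_lim:
  assumes cm: "complete_measure M"
  shows "(survival_prob M a c \<sigma> W E \<xi> \<longlongrightarrow> 0) (at_right 0)"
proof (rule tendstoI)
  fix e :: real assume e: "0 < e"
  have "\<forall>\<^sub>F n in sequentially. 1 - e < prob (Hs n)"
    using order_tendstoD(1)[OF Hs_lim] e by simp
  then obtain n where n: "1 - e < prob (Hs n)" by (meson eventually_sequentially order_refl)
  have mm: "0 < mm" unfolding mm_def by simp
  show "\<forall>\<^sub>F x in at_right 0. dist (survival_prob M a c \<sigma> W E \<xi> x) 0 < e"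
    unfolding eventually_at_right_field
  proof (intro exI[of _ "c * mm / real (Suc n)"] conjI allI impI)
    show "0 < c * mm / real (Suc n)" using c mm by simp
    fix y :: real assume y0: "0 < y" and y: "y < c * mm / real (Suc n)"
    have sub: "survival_event M a c \<sigma> W E \<xi> y \<subseteq> space M - Hs n"
      using Hs_not_surv[of _ n y] y unfolding survival_event_def by force
    have "prob (survival_event M a c \<sigma> W E \<xi> y) \<le> prob (space M - Hs n)"
      using sub by (intro finite_measure_mono) auto
    also have "\<dots> = 1 - prob (Hs n)" by (rule prob_compl) simp
    finally have "prob (survival_event M a c \<sigma> W E \<xi> y) < e" using n by simp
    then show "dist (survival_prob M a c \<sigma> W E \<xi> y) 0 < e"
      using y0 unfolding survival_prob_def by (simp add: dist_real_def)
  qed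
qed

end


theorem lemma1:
  fixes M :: "'w measure"
    and W :: "real \<Rightarrow> 'w \<Rightarrow> real"
    and E :: "nat \<Rightarrow> 'w \<Rightarrow> real"
    and \<xi> :: "nat \<Rightarrow> 'w \<Rightarrow> real"
    and lam c a \<sigma> :: real
  assumes "prob_space M"
    and "complete_measure M"
    and "std_brownian_motion M W"
    and "lam > 0"
    and "\<And>n. distributed M lborel (E n) (exponential_density lam)"
    and "\<And>n. \<xi> n \<in> borel_measurable M"
    and "\<And>n. distr M borel (\<xi> n) = distr M borel (\<xi> 0)"
    and "\<And>n \<omega>. \<omega> \<in> space M \<Longrightarrow> \<xi> n \<omega> > 0"
    and "integrable M (\<xi> 0)"
    and "prob_space.indep_vars M (\<lambda>_. borel)
           (\<lambda>i \<omega>. case i of Inl n \<Rightarrow> E n \<omega> | Inr n \<Rightarrow> \<xi> n \<omega>) UNIV"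
    and "prob_space.indep_set M
           (sigma_sets (space M) {W t -` A \<inter> space M | t A. t \<ge> 0 \<and> A \<in> sets borel})
           (sigma_sets (space M) {X -` A \<inter> space M | X A.
              (\<exists>n. X = E n \<or> X = \<xi> n) \<and> A \<in> sets borel})"
    and "c > 0" and "\<sigma> > 0"
  shows "(\<forall>u\<ge>0. survival_event M a c \<sigma> W E \<xi> u \<in> sets M) \<and>
         ((survival_prob M a c \<sigma> W E \<xi> \<longlongrightarrow> 0) (at_right 0))"
proof -
  interpret ruin M W E \<xi> lam c a \<sigma>
    unfolding ruin_def ruin_axioms_def using assms by auto
  show ?thesis using surv_sets[OF assms(2)] surv_lim[OF assms(2)] by blast
qed

end
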